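(* Let $m\ge 2$, $n\ge 1$, and let $\overrightarrow{K_{1,n}}$ be an orientation of the star $K_{1,n}$. Let $m\overrightarrow{K_{1,n}}$ be the disjoint union of $m$ copies of $\overrightarrow{K_{1,n}}$. Then $m\overrightarrow{K_{1,n}}$ is $\{0,2\}$-antimagic and $\{0,1,2\}$-antimagic if and only if each center is neither a sink nor a source.
   Context: The center of a star $K_{1,n}$ is its vertex of degree $n$ (for $n=1$, either vertex); a source is a vertex of in-degree $0$ and a sink a vertex of out-degree $0$. In an oriented graph $\overrightarrow{G}$, $d(u,v)$ is the length of a shortest directed path from $u$ to $v$ ($d(u,u)=0$, $d(u,v)=\infty$ if there is none). Let $\partial=\max\{d(u,v)<\infty : u,v\in V(\overrightarrow{G})\}$. A distance set is a nonempty $D\subseteq\{0,1,\dots,\partial\}$. The $D$-neighborhood of $u$ is $N_D(u)=\{v : d(u,v)\in D\}$. For a bijection $f:V(\overrightarrow{G})\to\{1,\dots,|V(\overrightarrow{G})|\}$, the $D$-weight of $u$ is $\omega_D(u)=\sum_{v\in N_D(u)} f(v)$. $\overrightarrow{G}$ is $D$-antimagic if $D\subseteq\{0,\dots,\partial\}$ (so $\{0,2\}$- or $\{0,1,2\}$-antimagic requires $\partial\ge 2$) and there is such a bijection $f$ with all $D$-weights pairwise distinct. *)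

theory Defs
  imports Main
begin

text \<open>Directed walks of length k from u to v correspond to (u,v) \<in> A ^^ k;
  the shortest walk length equals the shortest path length.\<close>

definition has_dist :: "('a \<times> 'a) set \<Rightarrow> 'a \<Rightarrow> 'a \<Rightarrow> nat \<Rightarrow> bool" where
  "has_dist A u v k \<longleftrightarrow> (u, v) \<in> A ^^ k \<and> (\<forall>j<k. (u, v) \<notin> A ^^ j)"

definition max_dist :: "'a set \<Rightarrow> ('a \<times> 'a) set \<Rightarrow> nat" where
  "max_dist V A = Max {k. \<exists>u\<in>V. \<exists>v\<in>V. has_dist A u v k}"

definition D_nbhd :: "'a set \<Rightarrow> ('a \<times> 'a) set \<Rightarrow> nat set \<Rightarrow> 'a \<Rightarrow> 'a set" where
  "D_nbhd V A D u = {v \<in> V. \<exists>k\<in>D. has_dist A u v k}"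

definition D_weight :: "'a set \<Rightarrow> ('a \<times> 'a) set \<Rightarrow> nat set \<Rightarrow> ('a \<Rightarrow> nat) \<Rightarrow> 'a \<Rightarrow> nat" where
  "D_weight V A D f u = (\<Sum>v\<in>D_nbhd V A D u. f v)"

definition D_antimagic :: "'a set \<Rightarrow> ('a \<times> 'a) set \<Rightarrow> nat set \<Rightarrow> bool" where
  "D_antimagic V A D \<longleftrightarrow> D \<noteq> {} \<and> D \<subseteq> {0..max_dist V A} \<and>
     (\<exists>f. bij_betw f V {1..card V} \<and> inj_on (D_weight V A D f) V)"

definition is_source :: "('a \<times> 'a) set \<Rightarrow> 'a \<Rightarrow> bool" where
  "is_source A c \<longleftrightarrow> (\<nexists>v. (v, c) \<in> A)"

definition is_sink :: "('a \<times> 'a) set \<Rightarrow> 'a \<Rightarrow> bool" where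
  "is_sink A c \<longleftrightarrow> (\<nexists>v. (c, v) \<in> A)"

text \<open>Orientation of the star K_{1,n}: center 0, leaves 1..n; out i means the
  edge is oriented from the center to leaf i, otherwise from leaf i to the center.\<close>
definition star_arcs :: "nat \<Rightarrow> (nat \<Rightarrow> bool) \<Rightarrow> (nat \<times> nat) set" where
  "star_arcs n out = {(0, i) | i. 1 \<le> i \<and> i \<le> n \<and> out i} \<union> {(i, 0) | i. 1 \<le> i \<and> i \<le> n \<and> \<not> out i}"

text \<open>Disjoint union of m copies: vertex (j, a) is vertex a of copy j.\<close>
definition mstar_verts :: "nat \<Rightarrow> nat \<Rightarrow> (nat \<times> nat) set" where
  "mstar_verts m n = {..<m} \<times> {0..n}"

definition mstar_arcs :: "nat \<Rightarrow> nat \<Rightarrow> (nat \<Rightarrow> bool) \<Rightarrow> ((nat \<times> nat) \<times> (nat \<times> nat)) set" where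
  "mstar_arcs m n out = {((j, a), (j, b)) | j a b. j < m \<and> (a, b) \<in> star_arcs n out}"

end

theory Submission
  imports Defs
begin

definition Os :: "nat \<Rightarrow> (nat \<Rightarrow> bool) \<Rightarrow> nat set" where
  "Os n out = {i. 1 \<le> i \<and> i \<le> n \<and> out i}"
definition Is :: "nat \<Rightarrow> (nat \<Rightarrow> bool) \<Rightarrow> nat set" where
  "Is n out = {i. 1 \<le> i \<and> i \<le> n \<and> \<not> out i}"

lemma arc_iff:
  "((x, y) \<in> mstar_arcs m n out) \<longleftrightarrow> fst y = fst x \<and> fst x < m \<and>
     ((snd x = 0 \<and> snd y \<in> Os n out) \<or> (snd y = 0 \<and> snd x \<in> Is n out))"
  by (cases x; cases y) (auto simp: mstar_arcs_def star_arcs_def Os_def Is_def)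

lemma pow2_iff:
  "((x, y) \<in> mstar_arcs m n out ^^ 2) \<longleftrightarrow> fst y = fst x \<and> fst x < m \<and>
     snd x \<in> Is n out \<and> snd y \<in> Os n out"
proof -
  have e: "mstar_arcs m n out ^^ 2 = mstar_arcs m n out O mstar_arcs m n out"
    by (simp add: numeral_2_eq_2)
  show ?thesis
  proof
    assume "(x, y) \<in> mstar_arcs m n out ^^ 2"
    then obtain z where "(x,z) \<in> mstar_arcs m n out" "(z,y) \<in> mstar_arcs m n out"
      unfolding e by blast
    then show "fst y = fst x \<and> fst x < m \<and> snd x \<in> Is n out \<and> snd y \<in> Os n out"
      by (auto simp: arc_iff Os_def Is_def)
  next
    assume a: "fst y = fst x \<and> fst x < m \<and> snd x \<in> Is n out \<and> snd y \<in> Os n out"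
    have "(x, (fst x, 0)) \<in> mstar_arcs m n out" "((fst x, 0), y) \<in> mstar_arcs m n out"
      using a by (auto simp: arc_iff)
    then show "(x, y) \<in> mstar_arcs m n out ^^ 2" unfolding e by blast
  qed
qed

lemma pow3: "k \<ge> 3 \<Longrightarrow> mstar_arcs m n out ^^ k = {}"
proof (induction k rule: dec_induct)
  case base
  have e: "mstar_arcs m n out ^^ 3 = mstar_arcs m n out ^^ 2 O mstar_arcs m n out"
    by (simp add: numeral_3_eq_3 numeral_2_eq_2)
  show ?case unfolding e
    by (auto simp: arc_iff pow2_iff Os_def Is_def)
next
  case (step k)
  then show ?case by simp
qed

lemma hd0: "has_dist (mstar_arcs m n out) u v 0 \<longleftrightarrow> u = v"
  by (simp add: has_dist_def)

lemma hd1: "has_dist (mstar_arcs m n out) u v 1 \<longleftrightarrow> (u, v) \<in> mstar_arcs m n out"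
  by (cases u; cases v) (auto simp: has_dist_def arc_iff Os_def Is_def)

lemma hd2: "has_dist (mstar_arcs m n out) u v 2 \<longleftrightarrow> (u, v) \<in> mstar_arcs m n out ^^ 2"
proof -
  have "(u, v) \<in> mstar_arcs m n out ^^ 2 \<Longrightarrow> j < 2 \<Longrightarrow> (u, v) \<notin> mstar_arcs m n out ^^ j" for j
    by (cases u; cases v; cases j) (auto simp: pow2_iff arc_iff Os_def Is_def)
  then show ?thesis by (auto simp: has_dist_def)
qed

lemma hd3: "k \<ge> 3 \<Longrightarrow> \<not> has_dist (mstar_arcs m n out) u v k"
  by (simp add: has_dist_def pow3)

lemma hd_le2: "has_dist (mstar_arcs m n out) u v k \<Longrightarrow> k \<le> 2"
  using hd3[of k] by (cases "k \<ge> 3") auto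

lemma L1: "j < m \<Longrightarrow> s < P \<Longrightarrow> j + 1 + s * m \<le> m * (P::nat)"
proof -
  assume a: "j < m" "s < P"
  have "j + 1 + s * m \<le> m + s * m" using a by simp
  also have "\<dots> = (s + 1) * m" by simp
  also have "\<dots> \<le> P * m" using a by (intro mult_le_mono1) simp
  finally show ?thesis by (simp add: mult.commute)
qed

lemma L2: "j < m \<Longrightarrow> j' < m \<Longrightarrow> j + 1 + s * m = j' + 1 + s' * (m::nat) \<Longrightarrow> j = j' \<and> s = s'"
proof -
  assume a: "j < m" "j' < m" "j + 1 + s * m = j' + 1 + s' * m"
  then have e: "j + s * m = j' + s' * m" by simp
  have jj: "j = j'"
  proof -
    have "j = (j + s * m) mod m" using a(1) by simp
    also have "\<dots> = (j' + s' * m) mod m" using e by simp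
    also have "\<dots> = j'" using a(2) by simp
    finally show ?thesis .
  qed
  with e a show ?thesis by simp
qed

lemma L3: "j < j' \<Longrightarrow> t < Q \<Longrightarrow> j * Q + t < j' * Q + (t'::nat)"
proof -
  assume a: "j < j'" "t < Q"
  have "j * Q + t < j * Q + Q" using a by simp
  also have "\<dots> = Suc j * Q" by simp
  also have "\<dots> \<le> j' * Q" using a by (intro mult_le_mono1) simp
  finally show ?thesis by simp
qed

lemma L4: "j < m \<Longrightarrow> t < Q \<Longrightarrow> j * Q + t < m * (Q::nat)"
  using L3[of j m t Q 0] by simp

lemma nb02: "D_nbhd V (mstar_arcs m n out) {0,2} u = {v\<in>V. v = u \<or> (u,v) \<in> mstar_arcs m n out ^^ 2}"
  by (auto simp: D_nbhd_def hd0 hd2)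

lemma nb012: "D_nbhd V (mstar_arcs m n out) {0,1,2} u =
   {v\<in>V. v = u \<or> (u,v) \<in> mstar_arcs m n out \<or> (u,v) \<in> mstar_arcs m n out ^^ 2}"
  by (auto simp: D_nbhd_def hd0 hd1[simplified] hd2)

lemma kinds: "a \<le> n \<Longrightarrow> a = 0 \<or> (a \<in> Os n out) \<or> (a \<in> Is n out)"
  by (auto simp: Os_def Is_def)

lemma OI: "a \<in> Os n out \<Longrightarrow> out a \<and> a \<noteq> 0 \<and> a \<le> n" "a \<in> Is n out \<Longrightarrow> \<not> out a \<and> a \<noteq> 0 \<and> a \<le> n"
  by (auto simp: Os_def Is_def)

lemma nbhds:
  assumes "j < m" "a \<le> n"
  shows "a \<in> Is n out \<Longrightarrow> D_nbhd (mstar_verts m n) (mstar_arcs m n out) {0,2} (j,a) = insert (j,a) ((\<lambda>x. (j,x)) ` Os n out)"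
    and "a \<notin> Is n out \<Longrightarrow> D_nbhd (mstar_verts m n) (mstar_arcs m n out) {0,2} (j,a) = {(j,a)}"
    and "a = 0 \<Longrightarrow> D_nbhd (mstar_verts m n) (mstar_arcs m n out) {0,1,2} (j,a) = insert (j,a) ((\<lambda>x. (j,x)) ` Os n out)"
    and "a \<in> Os n out \<Longrightarrow> D_nbhd (mstar_verts m n) (mstar_arcs m n out) {0,1,2} (j,a) = {(j,a)}"
    and "a \<in> Is n out \<Longrightarrow> D_nbhd (mstar_verts m n) (mstar_arcs m n out) {0,1,2} (j,a) = insert (j,a) (insert (j,0) ((\<lambda>x. (j,x)) ` Os n out))"
  using assms unfolding nb02 nb012 by (auto simp: pow2_iff arc_iff mstar_verts_def Os_def Is_def)

lemma construct:
  assumes m: "m \<ge> 1"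
  shows "\<exists>f. bij_betw f (mstar_verts m n) {1..card (mstar_verts m n)} \<and>
    inj_on (D_weight (mstar_verts m n) (mstar_arcs m n out) {0,2} f) (mstar_verts m n) \<and>
    inj_on (D_weight (mstar_verts m n) (mstar_arcs m n out) {0,1,2} f) (mstar_verts m n)"
proof -
  define Ot where "Ot = Os n out"
  define It where "It = Is n out"
  define V where "V = mstar_verts m n"
  define Ar where "Ar = mstar_arcs m n out"
  have finO: "finite Ot" unfolding Ot_def Os_def by (rule finite_subset[of _ "{..n}"]) auto
  have finI: "finite It" unfolding It_def Is_def by (rule finite_subset[of _ "{..n}"]) auto
  obtain \<sigma> where \<sigma>: "bij_betw \<sigma> Ot {0..<card Ot}" using ex_bij_betw_finite_nat finO by blast
  obtain \<tau> where \<tau>: "bij_betw \<tau> It {0..<card It}" using ex_bij_betw_finite_nat finI by blast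
  define P where "P = card Ot"
  define Q where "Q = card It"
  have PQ: "P + Q = n"
  proof -
    have "Ot \<union> It = {1..n}" "Ot \<inter> It = {}" unfolding Ot_def It_def Os_def Is_def by auto
    then have "card {1..n} = P + Q" unfolding P_def Q_def
      using card_Un_disjoint[OF finO finI] by simp
    then show ?thesis by simp
  qed
  define A where "A = m * P + m"
  have AQ: "A + m * Q = m * (n + 1)" unfolding A_def PQ[symmetric] by (simp add: algebra_simps)
  define f where "f = (\<lambda>(j,a). if a = 0 then m*P+1+j else if out a then j+1+\<sigma> a*m else A+1+j*Q+\<tau> a)"
  have f0: "f (j,0) = m*P+1+j" for j by (simp add: f_def)
  have fO: "a \<in> Ot \<Longrightarrow> f (j,a) = j+1+\<sigma> a*m" for j a using OI(1)[of a n out] by (simp add: f_def Ot_def)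
  have fI: "a \<in> It \<Longrightarrow> f (j,a) = A+1+j*Q+\<tau> a" for j a using OI(2)[of a n out] by (simp add: f_def It_def)
  have \<sigma>lt: "a \<in> Ot \<Longrightarrow> \<sigma> a < P" for a using \<sigma> unfolding P_def by (auto dest: bij_betw_apply)
  have \<tau>lt: "a \<in> It \<Longrightarrow> \<tau> a < Q" for a using \<tau> unfolding Q_def by (auto dest: bij_betw_apply)
  have \<sigma>inj: "a \<in> Ot \<Longrightarrow> b \<in> Ot \<Longrightarrow> \<sigma> a = \<sigma> b \<Longrightarrow> a = b" for a b
    using \<sigma> by (auto dest: bij_betw_imp_inj_on inj_onD)
  have \<tau>inj: "a \<in> It \<Longrightarrow> b \<in> It \<Longrightarrow> \<tau> a = \<tau> b \<Longrightarrow> a = b" for a b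
    using \<tau> by (auto dest: bij_betw_imp_inj_on inj_onD)
  have Vmem: "(j,a) \<in> V \<longleftrightarrow> j < m \<and> a \<le> n" for j a by (auto simp: V_def mstar_verts_def)
  have kd: "a \<le> n \<Longrightarrow> a = 0 \<or> a \<in> Ot \<or> a \<in> It" for a using kinds[of a n out] by (simp add: Ot_def It_def)
  have cardV: "card V = m * (n + 1)" by (simp add: V_def mstar_verts_def card_cartesian_product)
  have r0: "j < m \<Longrightarrow> m*P < f(j,0) \<and> f(j,0) \<le> A" for j by (simp add: f0 A_def)
  have rO: "j < m \<Longrightarrow> a \<in> Ot \<Longrightarrow> 1 \<le> f(j,a) \<and> f(j,a) \<le> m*P" for j a
    using L1[of j m "\<sigma> a" P] \<sigma>lt[of a] by (simp add: fO)
  have rI: "j < m \<Longrightarrow> a \<in> It \<Longrightarrow> A < f(j,a) \<and> f(j,a) \<le> A + m*Q" for j a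
    using L4[of j m "\<tau> a" Q] \<tau>lt[of a] by (simp add: fI)
  have injf: "inj_on f V"
  proof (rule inj_onI)
    fix u v assume uv: "u \<in> V" "v \<in> V" "f u = f v"
    obtain j a where u: "u = (j,a)" by (cases u)
    obtain j' b where v: "v = (j',b)" by (cases v)
    have jm: "j < m" "a \<le> n" "j' < m" "b \<le> n" using uv u v Vmem by auto
    have e: "f (j,a) = f (j',b)" using uv u v by simp
    from kd[OF jm(2)] kd[OF jm(4)] have "(j,a) = (j',b)"
    proof (elim disjE)
      assume "a = 0" "b = 0" then show ?thesis using e by (simp add: f0)
    next
      assume "a = 0" "b \<in> Ot" then show ?thesis using e r0[of j] rO[of j' b] jm by simp
    next
      assume "a = 0" "b \<in> It" then show ?thesis using e r0[of j] rI[of j' b] jm by simp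
    next
      assume "a \<in> Ot" "b = 0" then show ?thesis using e r0[of j'] rO[of j a] jm by simp
    next
      assume "a \<in> Ot" "b \<in> It" then show ?thesis using e rI[of j' b] rO[of j a] jm by (simp add: A_def)
    next
      assume "a \<in> It" "b = 0" then show ?thesis using e r0[of j'] rI[of j a] jm by simp
    next
      assume "a \<in> It" "b \<in> Ot" then show ?thesis using e rI[of j a] rO[of j' b] jm by (simp add: A_def)
    next
      assume ab: "a \<in> Ot" "b \<in> Ot"
      then have "j = j' \<and> \<sigma> a = \<sigma> b" using e jm L2[of j m j' "\<sigma> a" "\<sigma> b"] by (simp add: fO)
      then show ?thesis using \<sigma>inj ab by simp
    next
      assume ab: "a \<in> It" "b \<in> It"
      have e2: "j*Q + \<tau> a = j'*Q + \<tau> b" using e ab by (simp add: fI)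
      have "j = j'"
      proof (rule ccontr)
        assume "j \<noteq> j'"
        then consider "j < j'" | "j' < j" by linarith
        then show False using e2 L3[of j j' "\<tau> a" Q "\<tau> b"] L3[of j' j "\<tau> b" Q "\<tau> a"] \<tau>lt ab
          by cases auto
      qed
      then show ?thesis using e2 \<tau>inj ab by simp
    qed
    then show "u = v" using u v by simp
  qed
  have imgsub: "f ` V \<subseteq> {1..m*(n+1)}"
  proof
    fix y assume "y \<in> f ` V"
    then obtain j a where y: "y = f (j,a)" "j < m" "a \<le> n" using Vmem by auto
    from kd[OF y(3)] show "y \<in> {1..m*(n+1)}"
      using r0[of j] rO[of j a] rI[of j a] y AQ by (auto simp: A_def)
  qed
  have bijf: "bij_betw f V {1..card V}"
  proof -
    have "card (f ` V) = card {1..m*(n+1)}" using card_image[OF injf] cardV by simp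
    then have "f ` V = {1..m*(n+1)}" using card_subset_eq[OF _ imgsub] by simp
    then show ?thesis using injf cardV by (simp add: bij_betw_def)
  qed
  define K where "K = (\<Sum>x\<in>Ot. \<sigma> x)"
  have Ssum: "(\<Sum>v\<in>Pair j ` Ot. f v) = j*P + P + K*m" for j
  proof -
    have "(\<Sum>v\<in>Pair j ` Ot. f v) = (\<Sum>x\<in>Ot. f (j,x))"
      by (subst sum.reindex) (auto simp: inj_on_def)
    also have "\<dots> = (\<Sum>x\<in>Ot. (j+1) + \<sigma> x*m)" by (rule sum.cong) (auto simp: fO)
    also have "\<dots> = (\<Sum>x\<in>Ot. (j+1)) + (\<Sum>x\<in>Ot. \<sigma> x)*m"
      by (simp only: sum.distrib sum_distrib_right)
    also have "\<dots> = j*P + P + K*m"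
      by (simp add: K_def P_def algebra_simps)
    finally show ?thesis .
  qed
  have notin: "(j::nat,a) \<notin> Pair j ` Ot" if "a \<notin> Ot" for j a using that by auto
  have z0: "0 \<notin> Ot" "0 \<notin> It" by (auto simp: Ot_def It_def Os_def Is_def)
  have OnI: "a \<in> It \<Longrightarrow> a \<notin> Ot" for a by (auto simp: Ot_def It_def Os_def Is_def)
  have OnI': "a \<in> Ot \<Longrightarrow> a \<notin> It" for a by (auto simp: Ot_def It_def Os_def Is_def)
  have finP: "finite (Pair (j::nat) ` Ot)" for j using finO by simp
  define w2 where "w2 = D_weight V Ar {0,2} f"
  define w3 where "w3 = D_weight V Ar {0,1,2} f"
  have w2_0: "j < m \<Longrightarrow> w2 (j,0) = m*P+1+j" for j
    unfolding w2_def D_weight_def V_def Ar_def using nbhds(2)[of j m 0 n out] z0 by (simp add: It_def f0)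
  have w2_O: "j < m \<Longrightarrow> a \<in> Ot \<Longrightarrow> w2 (j,a) = j+1+\<sigma> a*m" for j a
    unfolding w2_def D_weight_def V_def Ar_def using nbhds(2)[of j m a n out] OnI'[of a] OI(1)[of a n out]
    by (simp add: It_def Ot_def fO)
  have w2_I: "j < m \<Longrightarrow> a \<in> It \<Longrightarrow> w2 (j,a) = A+1+j*Q+\<tau> a + (j*P + P + K*m)" for j a
  proof -
    assume a: "j < m" "a \<in> It"
    have "w2 (j,a) = f (j,a) + (\<Sum>v\<in>Pair j ` Ot. f v)"
      unfolding w2_def D_weight_def V_def Ar_def using nbhds(1)[of j m a n out] a OI(2)[of a n out]
        notin[of a j] OnI[of a] finP[of j] by (simp add: It_def Ot_def)
    then show ?thesis using a by (simp add: Ssum fI)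
  qed
  have w3_0: "j < m \<Longrightarrow> w3 (j,0) = m*P+1+j + (j*P + P + K*m)" for j
  proof -
    assume a: "j < m"
    have "w3 (j,0) = f (j,0) + (\<Sum>v\<in>Pair j ` Ot. f v)"
      unfolding w3_def D_weight_def V_def Ar_def using nbhds(3)[of j m 0 n out] a
        notin[of 0 j] z0 finP[of j] by (simp add: Ot_def)
    then show ?thesis using a by (simp add: Ssum f0)
  qed
  have w3_O: "j < m \<Longrightarrow> a \<in> Ot \<Longrightarrow> w3 (j,a) = j+1+\<sigma> a*m" for j a
    unfolding w3_def D_weight_def V_def Ar_def using nbhds(4)[of j m a n out] OI(1)[of a n out]
    by (simp add: Ot_def fO)
  have w3_I: "j < m \<Longrightarrow> a \<in> It \<Longrightarrow> w3 (j,a) = A+1+j*Q+\<tau> a + (m*P+1+j) + (j*P + P + K*m)" for j a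
  proof -
    assume a: "j < m" "a \<in> It"
    have "(j,a) \<notin> insert (j,0) (Pair j ` Ot)" using a OI(2)[of a n out] OnI[of a] by (auto simp: It_def)
    moreover have "(j,0) \<notin> Pair j ` Ot" using z0 by auto
    ultimately have "w3 (j,a) = f (j,a) + (f (j,0) + (\<Sum>v\<in>Pair j ` Ot. f v))"
      unfolding w3_def D_weight_def V_def Ar_def using nbhds(5)[of j m a n out] a OI(2)[of a n out]
        finP[of j] by (simp add: It_def Ot_def)
    then show ?thesis using a by (simp add: Ssum fI f0)
  qed
  have inj2: "inj_on w2 V"
  proof (rule inj_onI)
    fix u v assume uv: "u \<in> V" "v \<in> V" "w2 u = w2 v"
    obtain j a where u: "u = (j,a)" by (cases u)
    obtain j' b where v: "v = (j',b)" by (cases v)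
    have jm: "j < m" "a \<le> n" "j' < m" "b \<le> n" using uv u v Vmem by auto
    have e: "w2 (j,a) = w2 (j',b)" using uv u v by simp
    have oO: "j+1+\<sigma> x*m \<le> m*P" if "x \<in> Ot" "j < m" for x j
      using L1[of j m "\<sigma> x" P] \<sigma>lt[of x] that by simp
    from kd[OF jm(2)] kd[OF jm(4)] have "(j,a) = (j',b)"
    proof (elim disjE)
      assume "a = 0" "b = 0" then show ?thesis using e jm by (simp add: w2_0)
    next
      assume "a = 0" "b \<in> Ot" then show ?thesis using e jm oO[of b j'] by (simp add: w2_0 w2_O)
    next
      assume "a = 0" "b \<in> It" then show ?thesis using e jm by (simp add: w2_0 w2_I A_def)
    next
      assume "a \<in> Ot" "b = 0" then show ?thesis using e jm oO[of a j] by (simp add: w2_0 w2_O)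
    next
      assume "a \<in> Ot" "b \<in> It" then show ?thesis using e jm oO[of a j] by (simp add: w2_O w2_I A_def)
    next
      assume "a \<in> It" "b = 0" then show ?thesis using e jm by (simp add: w2_0 w2_I A_def)
    next
      assume "a \<in> It" "b \<in> Ot" then show ?thesis using e jm oO[of b j'] by (simp add: w2_O w2_I A_def)
    next
      assume ab: "a \<in> Ot" "b \<in> Ot"
      then have "j = j' \<and> \<sigma> a = \<sigma> b" using e jm L2[of j m j' "\<sigma> a" "\<sigma> b"] by (simp add: w2_O)
      then show ?thesis using \<sigma>inj ab by simp
    next
      assume ab: "a \<in> It" "b \<in> It"
      have e2: "j*Q + \<tau> a + j*P = j'*Q + \<tau> b + j'*P" using e ab jm by (simp add: w2_I)
      have "j = j'"
      proof (rule ccontr)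
        assume "j \<noteq> j'"
        then consider "j < j'" | "j' < j" by linarith
        then show False
        proof cases
          case 1 then show False using e2 L3[OF \<open>j < j'\<close> \<tau>lt[OF ab(1)], of "\<tau> b"] mult_le_mono1[OF less_imp_le[OF \<open>j < j'\<close>], of P] by linarith
        next
          case 2 then show False using e2 L3[OF \<open>j' < j\<close> \<tau>lt[OF ab(2)], of "\<tau> a"] mult_le_mono1[OF less_imp_le[OF \<open>j' < j\<close>], of P] by linarith
        qed
      qed
      then show ?thesis using e2 \<tau>inj ab by simp
    qed
    then show "u = v" using u v by simp
  qed
  have inj3: "inj_on w3 V"
  proof (rule inj_onI)
    fix u v assume uv: "u \<in> V" "v \<in> V" "w3 u = w3 v"
    obtain j a where u: "u = (j,a)" by (cases u)
    obtain j' b where v: "v = (j',b)" by (cases v)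
    have jm: "j < m" "a \<le> n" "j' < m" "b \<le> n" using uv u v Vmem by auto
    have e: "w3 (j,a) = w3 (j',b)" using uv u v by simp
    have oO: "j+1+\<sigma> x*m \<le> m*P" if "x \<in> Ot" "j < m" for x j
      using L1[of j m "\<sigma> x" P] \<sigma>lt[of x] that by simp
    have cI: "j*P + j < A" if "j < m" for j
    proof -
      have "j*P \<le> m*P" using that by (simp add: mult_le_mono1)
      then show ?thesis using that unfolding A_def by linarith
    qed
    from kd[OF jm(2)] kd[OF jm(4)] have "(j,a) = (j',b)"
    proof (elim disjE)
      assume "a = 0" "b = 0"
      then have e2: "j + j*P = j' + j'*P" using e jm by (simp add: w3_0)
      have "j = j'"
      proof (rule ccontr)
        assume "j \<noteq> j'"
        then consider "j < j'" | "j' < j" by linarith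
        then show False
        proof cases
          case 1 then show False using e2 mult_le_mono1[OF less_imp_le[OF \<open>j < j'\<close>], of P] by linarith
        next
          case 2 then show False using e2 mult_le_mono1[OF less_imp_le[OF \<open>j' < j\<close>], of P] by linarith
        qed
      qed
      then show ?thesis using \<open>a = 0\<close> \<open>b = 0\<close> by simp
    next
      assume "a = 0" "b \<in> Ot" then show ?thesis using e jm oO[of b j'] by (simp add: w3_0 w3_O)
    next
      assume "a = 0" "b \<in> It" then show ?thesis using e jm cI[of j] by (simp add: w3_0 w3_I)
    next
      assume "a \<in> Ot" "b = 0" then show ?thesis using e jm oO[of a j] by (simp add: w3_0 w3_O)
    next
      assume "a \<in> Ot" "b \<in> It" then show ?thesis using e jm oO[of a j] by (simp add: w3_O w3_I A_def)
    next
      assume "a \<in> It" "b = 0" then show ?thesis using e jm cI[of j'] by (simp add: w3_0 w3_I)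
    next
      assume "a \<in> It" "b \<in> Ot" then show ?thesis using e jm oO[of b j'] by (simp add: w3_O w3_I A_def)
    next
      assume ab: "a \<in> Ot" "b \<in> Ot"
      then have "j = j' \<and> \<sigma> a = \<sigma> b" using e jm L2[of j m j' "\<sigma> a" "\<sigma> b"] by (simp add: w3_O)
      then show ?thesis using \<sigma>inj ab by simp
    next
      assume ab: "a \<in> It" "b \<in> It"
      have e2: "j*Q + \<tau> a + j*P + j = j'*Q + \<tau> b + j'*P + j'" using e ab jm by (simp add: w3_I)
      have "j = j'"
      proof (rule ccontr)
        assume "j \<noteq> j'"
        then consider "j < j'" | "j' < j" by linarith
        then show False
        proof cases
          case 1 then show False using e2 L3[OF \<open>j < j'\<close> \<tau>lt[OF ab(1)], of "\<tau> b"] mult_le_mono1[OF less_imp_le[OF \<open>j < j'\<close>], of P] by linarith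
        next
          case 2 then show False using e2 L3[OF \<open>j' < j\<close> \<tau>lt[OF ab(2)], of "\<tau> a"] mult_le_mono1[OF less_imp_le[OF \<open>j' < j\<close>], of P] by linarith
        qed
      qed
      then show ?thesis using e2 \<tau>inj ab by simp
    qed
    then show "u = v" using u v by simp
  qed
  show ?thesis using bijf inj2 inj3 unfolding w2_def w3_def V_def Ar_def by blast
qed

theorem mainTheorem8:
  fixes m n :: nat and out :: "nat \<Rightarrow> bool"
  assumes "m \<ge> 2" and "n \<ge> 1"
  shows "(D_antimagic (mstar_verts m n) (mstar_arcs m n out) {0, 2} \<and>
          D_antimagic (mstar_verts m n) (mstar_arcs m n out) {0, 1, 2})
     \<longleftrightarrow> (\<forall>j<m. \<not> is_sink (mstar_arcs m n out) (j, 0) \<and> \<not> is_source (mstar_arcs m n out) (j, 0))"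
proof -
  define V where "V = mstar_verts m n"
  define Ar where "Ar = mstar_arcs m n out"
  have m0: "0 < m" using assms by simp
  have sink: "is_sink Ar (j,0) \<longleftrightarrow> Os n out = {}" if "j < m" for j
  proof
    assume "is_sink Ar (j,0)"
    then show "Os n out = {}" using that unfolding is_sink_def Ar_def
      by (auto simp: arc_iff) 
  next
    assume "Os n out = {}"
    then show "is_sink Ar (j,0)" unfolding is_sink_def Ar_def
      by (auto simp: arc_iff Is_def)
  qed
  have source: "is_source Ar (j,0) \<longleftrightarrow> Is n out = {}" if "j < m" for j
  proof
    assume "is_source Ar (j,0)"
    then show "Is n out = {}" using that unfolding is_source_def Ar_def
      by (auto simp: arc_iff) 
  next
    assume "Is n out = {}"
    then show "is_source Ar (j,0)" unfolding is_source_def Ar_def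
      by (auto simp: arc_iff Os_def)
  qed
  have rhs: "(\<forall>j<m. \<not> is_sink Ar (j, 0) \<and> \<not> is_source Ar (j, 0)) \<longleftrightarrow> Os n out \<noteq> {} \<and> Is n out \<noteq> {}"
    using sink source m0 by blast
  define Ks where "Ks = {k. \<exists>u\<in>V. \<exists>v\<in>V. has_dist Ar u v k}"
  have md: "max_dist V Ar = Max Ks" by (simp add: max_dist_def Ks_def)
  have finK: "finite Ks"
    by (rule finite_subset[of _ "{..2}"]) (auto simp: Ks_def Ar_def dest: hd_le2)
  have K0: "0 \<in> Ks" unfolding Ks_def using m0 by (auto simp: hd0 V_def Ar_def mstar_verts_def)
  have main: "(D_antimagic V Ar {0, 2} \<and> D_antimagic V Ar {0, 1, 2}) \<longleftrightarrow> Os n out \<noteq> {} \<and> Is n out \<noteq> {}"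
  proof
    assume "D_antimagic V Ar {0, 2} \<and> D_antimagic V Ar {0, 1, 2}"
    then have "2 \<le> Max Ks" unfolding D_antimagic_def md by auto
    then obtain k where k: "k \<in> Ks" "2 \<le> k" using Max_in[OF finK] K0 by blast
    then have "k = 2" using hd_le2 unfolding Ks_def Ar_def by fastforce
    then obtain u v where "has_dist Ar u v 2" using k unfolding Ks_def by auto
    then have "(u,v) \<in> Ar ^^ 2" unfolding Ar_def by (simp add: hd2)
    then show "Os n out \<noteq> {} \<and> Is n out \<noteq> {}" unfolding Ar_def pow2_iff by auto
  next
    assume "Os n out \<noteq> {} \<and> Is n out \<noteq> {}"
    then obtain x y where xy: "x \<in> Os n out" "y \<in> Is n out" by auto
    have "((0,y),(0,x)) \<in> Ar ^^ 2" using xy m0 unfolding Ar_def pow2_iff by simp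
    moreover have "(0,y) \<in> V" "(0,x) \<in> V" using xy m0 by (auto simp: V_def mstar_verts_def Os_def Is_def)
    ultimately have "2 \<in> Ks" unfolding Ks_def Ar_def by (auto simp: hd2)
    then have "2 \<le> max_dist V Ar" unfolding md using finK by simp
    then have sub: "{0,2} \<subseteq> {0..max_dist V Ar}" "{0,1,2} \<subseteq> {0..max_dist V Ar}" by auto
    obtain f where "bij_betw f V {1..card V}" "inj_on (D_weight V Ar {0,2} f) V"
        "inj_on (D_weight V Ar {0,1,2} f) V"
      using construct[of m n out] m0 unfolding V_def Ar_def by auto
    then show "D_antimagic V Ar {0, 2} \<and> D_antimagic V Ar {0, 1, 2}"
      using sub unfolding D_antimagic_def by blast
  qed
  show ?thesis using main rhs unfolding V_def Ar_def by simp
qed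

end
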